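(* A sequence of positive integers $(k_n,\ldots,k_1)$ is the restricted sequence of some non-crossing $n$-chord diagram if and only if $k_1=1$ and $k_{i+1}\le k_i+1$ for $1\le i\le n-1$.
   Context: A non-crossing $n$-chord diagram is a non-crossing perfect matching of $\{1,\ldots,2n\}$ (arcs in the upper half-plane with endpoints $1,\ldots,2n$); $D_n$ is the set of these, $D_0=\{\phi\}$. For $1\le k\le 2n+1$, $l_k:D_n\to D_{n+1}$: $l_k(\alpha)$ matches $k$ with $k+1$, and each old point $i$ becomes $i$ if $i<k$ and $i+2$ if $i\ge k$, old pairs kept. For $\alpha\in D_n$ ($n\ge1$) let $k_n$ be the smallest $k$ such that $k$ is matched with $k+1$, and $\alpha'\in D_{n-1}$ be $\alpha$ with that arc removed and points renumbered order-preservingly, so $\alpha=l_{k_n}(\alpha')$. The restricted sequence of $\alpha$ is $(k_n,k_{n-1},\ldots,k_1)$, where $(k_{n-1},\ldots,k_1)$ is the restricted sequence of $\alpha'$ (empty for $\phi$). *)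

theory Defs
  imports Main
begin

definition perfect_matching :: "nat \<Rightarrow> (nat \<times> nat) set \<Rightarrow> bool" where
  "perfect_matching n M \<longleftrightarrow>
     (\<forall>(a,b)\<in>M. a < b \<and> a \<in> {1..2*n} \<and> b \<in> {1..2*n}) \<and>
     (\<forall>i\<in>{1..2*n}. \<exists>!p. p \<in> M \<and> (i = fst p \<or> i = snd p))"

definition noncrossing :: "(nat \<times> nat) set \<Rightarrow> bool" where
  "noncrossing M \<longleftrightarrow> (\<forall>(a,b)\<in>M. \<forall>(c,d)\<in>M. \<not> (a < c \<and> c < b \<and> b < d))"

definition D :: "nat \<Rightarrow> (nat \<times> nat) set set" where
  "D n = {M. perfect_matching n M \<and> noncrossing M}"

definition shift :: "nat \<Rightarrow> nat \<Rightarrow> nat" where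
  "shift k i = (if i < k then i else i + 2)"

definition l :: "nat \<Rightarrow> (nat \<times> nat) set \<Rightarrow> (nat \<times> nat) set" where
  "l k M = insert (k, k+1) ((\<lambda>(a,b). (shift k a, shift k b)) ` M)"

definition unshift :: "nat \<Rightarrow> nat \<Rightarrow> nat" where
  "unshift k i = (if i < k then i else i - 2)"

definition remove_arc :: "nat \<Rightarrow> (nat \<times> nat) set \<Rightarrow> (nat \<times> nat) set" where
  "remove_arc k M = (\<lambda>(a,b). (unshift k a, unshift k b)) ` (M - {(k, k+1)})"

definition kmin :: "(nat \<times> nat) set \<Rightarrow> nat" where
  "kmin M = (LEAST k. (k, k+1) \<in> M)"

text \<open>Restricted sequence [k_n, ..., k_1] of a diagram in D n.\<close>
fun rseq :: "nat \<Rightarrow> (nat \<times> nat) set \<Rightarrow> nat list" where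
  "rseq 0 M = []"
| "rseq (Suc n) M = kmin M # rseq n (remove_arc (kmin M) M)"

end

theory Submission
  imports Defs
begin

lemma shift_less_iff[simp]: "shift k a < shift k b \<longleftrightarrow> a < b"
  by (auto simp: shift_def)
lemma shift_eq_iff[simp]: "shift k a = shift k b \<longleftrightarrow> a = b"
  by (auto simp: shift_def)
lemma shift_ne[simp]: "shift k a \<noteq> k" "shift k a \<noteq> Suc k" "k \<noteq> shift k a" "Suc k \<noteq> shift k a"
  by (auto simp: shift_def)
lemma unshift_shift[simp]: "unshift k (shift k a) = a"
  by (auto simp: shift_def unshift_def)
lemma shift_unshift: "i \<noteq> k \<Longrightarrow> i \<noteq> Suc k \<Longrightarrow> shift k (unshift k i) = i"
  by (auto simp: shift_def unshift_def)

definition sh :: "nat \<Rightarrow> nat \<times> nat \<Rightarrow> nat \<times> nat" where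
  "sh k p = (shift k (fst p), shift k (snd p))"

lemma l_sh: "l k M = insert (k, Suc k) (sh k ` M)"
  unfolding l_def sh_def by (simp add: case_prod_beta')

lemma sh_inj[simp]: "sh k p = sh k q \<longleftrightarrow> p = q"
  by (cases p, cases q) (auto simp: sh_def)

lemma noncrossing_alt: "noncrossing M \<longleftrightarrow>
   (\<forall>p\<in>M. \<forall>q\<in>M. \<not> (fst p < fst q \<and> fst q < snd p \<and> snd p < snd q))"
  unfolding noncrossing_def split_def by simp

lemma pm_range: "perfect_matching n M \<Longrightarrow> p \<in> M \<Longrightarrow>
   fst p < snd p \<and> fst p \<in> {1..2*n} \<and> snd p \<in> {1..2*n}"
  unfolding perfect_matching_def by (cases p) auto

lemma pm_unique: assumes "perfect_matching n M" "p \<in> M" "q \<in> M"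
  "x = fst p \<or> x = snd p" "x = fst q \<or> x = snd q" shows "p = q"
proof -
  have "x \<in> {1..2*n}" using pm_range[OF assms(1,2)] assms(4) by auto
  then have "\<exists>!p. p\<in>M \<and> (x = fst p \<or> x = snd p)" using assms(1) unfolding perfect_matching_def by blast
  then show ?thesis using assms by blast
qed

lemma l_in_D: assumes "\<alpha> \<in> D n" "1 \<le> k" "k \<le> 2*n+1" shows "l k \<alpha> \<in> D (Suc n)"
proof -
  have pm: "perfect_matching n \<alpha>" and nc: "noncrossing \<alpha>" using assms(1) by (auto simp: D_def)
  have A: "\<forall>(a,b)\<in>l k \<alpha>. a < b \<and> a \<in> {1..2*Suc n} \<and> b \<in> {1..2*Suc n}"
  proof
    fix p assume "p \<in> l k \<alpha>"
    then show "case p of (a,b) \<Rightarrow> a < b \<and> a \<in> {1..2*Suc n} \<and> b \<in> {1..2*Suc n}"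
    proof (cases "p = (k, Suc k)")
      case True then show ?thesis using assms by auto
    next
      case False
      then obtain q where q: "q \<in> \<alpha>" "p = sh k q" using \<open>p \<in> l k \<alpha>\<close> by (auto simp: l_sh)
      show ?thesis using pm_range[OF pm q(1)] q(2) by (auto simp: sh_def shift_def split: prod.splits)
    qed
  qed
  have B: "\<forall>i\<in>{1..2*Suc n}. \<exists>!p. p \<in> l k \<alpha> \<and> (i = fst p \<or> i = snd p)"
  proof
    fix i assume i: "i \<in> {1..2*Suc n}"
    show "\<exists>!p. p \<in> l k \<alpha> \<and> (i = fst p \<or> i = snd p)"
    proof (cases "i = k \<or> i = Suc k")
      case True
      show ?thesis
      proof (rule ex1I[of _ "(k, Suc k)"])
        show "(k,Suc k) \<in> l k \<alpha> \<and> (i = fst (k, Suc k) \<or> i = snd (k, Suc k))" using True by (simp add: l_sh)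
        fix p assume "p \<in> l k \<alpha> \<and> (i = fst p \<or> i = snd p)"
        then show "p = (k, Suc k)" using True by (auto simp: l_sh sh_def)
      qed
    next
      case False
      define j where "j = unshift k i"
      have ij: "shift k j = i" using False shift_unshift j_def by auto
      have j: "j \<in> {1..2*n}" using i False assms(2,3) by (auto simp: j_def unshift_def)
      then obtain q where q: "q \<in> \<alpha>" "j = fst q \<or> j = snd q" using pm unfolding perfect_matching_def by blast
      show ?thesis
      proof (rule ex1I[of _ "sh k q"])
        show "sh k q \<in> l k \<alpha> \<and> (i = fst (sh k q) \<or> i = snd (sh k q))" using q ij by (auto simp: l_sh sh_def)
        fix p assume p: "p \<in> l k \<alpha> \<and> (i = fst p \<or> i = snd p)"
        then have "p \<noteq> (k, Suc k)" using False by auto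
        then obtain q' where q': "q' \<in> \<alpha>" "p = sh k q'" using p by (auto simp: l_sh)
        have "j = fst q' \<or> j = snd q'" using p q' ij by (auto simp: sh_def)
        then have "q' = q" using pm_unique[OF pm q'(1) q(1)] q(2) by blast
        then show "p = sh k q" using q' by simp
      qed
    qed
  qed
  have C: "noncrossing (l k \<alpha>)"
  proof -
    have "\<forall>p\<in>sh k ` \<alpha>. \<forall>q\<in>sh k ` \<alpha>. \<not> (fst p < fst q \<and> fst q < snd p \<and> snd p < snd q)"
      using nc by (auto simp: noncrossing_alt sh_def)
    then show ?thesis unfolding noncrossing_alt l_sh by auto
  qed
  show ?thesis using A B C unfolding D_def perfect_matching_def by auto
qed

lemma l_inv_D: assumes "l k \<beta> \<in> D (Suc n)" "1 \<le> k" "k \<le> 2*n+1" shows "\<beta> \<in> D n"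
proof -
  have pm: "perfect_matching (Suc n) (l k \<beta>)" and nc: "noncrossing (l k \<beta>)" using assms(1) by (auto simp: D_def)
  have shin: "sh k q \<in> l k \<beta>" if "q \<in> \<beta>" for q using that by (simp add: l_sh)
  have A: "\<forall>(a,b)\<in>\<beta>. a < b \<and> a \<in> {1..2*n} \<and> b \<in> {1..2*n}"
  proof
    fix p assume p: "p \<in> \<beta>"
    show "case p of (a,b) \<Rightarrow> a < b \<and> a \<in> {1..2*n} \<and> b \<in> {1..2*n}"
      using pm_range[OF pm shin[OF p]] assms(2,3) shift_ne[of k "fst p"] shift_ne[of k "snd p"]
      by (auto simp: sh_def shift_def split: prod.splits if_splits)
  qed
  have B: "\<forall>i\<in>{1..2*n}. \<exists>!p. p \<in> \<beta> \<and> (i = fst p \<or> i = snd p)"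
  proof
    fix i assume i: "i \<in> {1..2*n}"
    have si: "shift k i \<in> {1..2*Suc n}" using i by (auto simp: shift_def)
    then obtain p where p: "p \<in> l k \<beta>" "shift k i = fst p \<or> shift k i = snd p"
      using pm unfolding perfect_matching_def by blast
    have "p \<noteq> (k, Suc k)" using p(2) by auto
    then obtain q where q: "q \<in> \<beta>" "p = sh k q" using p by (auto simp: l_sh)
    have qi: "i = fst q \<or> i = snd q" using p(2) q(2) by (auto simp: sh_def)
    show "\<exists>!p. p \<in> \<beta> \<and> (i = fst p \<or> i = snd p)"
    proof (rule ex1I[of _ q])
      show "q \<in> \<beta> \<and> (i = fst q \<or> i = snd q)" using q qi by simp
      fix q' assume q': "q' \<in> \<beta> \<and> (i = fst q' \<or> i = snd q')"
      have "shift k i = fst (sh k q') \<or> shift k i = snd (sh k q')" using q' by (auto simp: sh_def)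
      then have "sh k q' = p" using pm_unique[OF pm shin[of q'] p(1)] q' p(2) by blast
      then show "q' = q" using q(2) by simp
    qed
  qed
  have C: "noncrossing \<beta>"
    unfolding noncrossing_alt
  proof (intro ballI)
    fix p q assume "p \<in> \<beta>" "q \<in> \<beta>"
    then have "\<not> (fst (sh k p) < fst (sh k q) \<and> fst (sh k q) < snd (sh k p) \<and> snd (sh k p) < snd (sh k q))"
      using nc shin unfolding noncrossing_alt by blast
    then show "\<not> (fst p < fst q \<and> fst q < snd p \<and> snd p < snd q)" by (simp add: sh_def)
  qed
  show ?thesis using A B C unfolding D_def perfect_matching_def by auto
qed

lemma remove_l: "remove_arc k (l k \<beta>) = \<beta>"
proof -
  have "insert (k, Suc k) (sh k ` \<beta>) - {(k, Suc k)} = sh k ` \<beta>" by (auto simp: sh_def)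
  moreover have "(\<lambda>(a,b). (unshift k a, unshift k b)) ` sh k ` \<beta> = \<beta>"
    by (simp add: image_image sh_def case_prod_beta')
  ultimately show ?thesis unfolding remove_arc_def l_sh by simp
qed

lemma kmin_l: assumes "\<forall>a. (a, Suc a) \<in> \<beta> \<longrightarrow> k \<le> Suc a" shows "kmin (l k \<beta>) = k"
  unfolding kmin_def
proof (rule Least_equality)
  show "(k, k+1) \<in> l k \<beta>" by (simp add: l_sh)
  fix y assume "(y, y+1) \<in> l k \<beta>"
  then consider "y = k" | q where "q \<in> \<beta>" "(y, Suc y) = sh k q" by (auto simp: l_sh)
  then show "k \<le> y"
  proof cases
    case 1 then show ?thesis by simp
  next
    case 2
    obtain a b where ab: "q = (a,b)" by fastforce
    show ?thesis using 2 ab assms by (auto simp: sh_def shift_def split: if_splits)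
  qed
qed

lemma exists_adj: assumes "\<alpha> \<in> D (Suc n)" shows "\<exists>k. (k, Suc k) \<in> \<alpha>"
proof -
  have pm: "perfect_matching (Suc n) \<alpha>" and nc: "noncrossing \<alpha>" using assms by (auto simp: D_def)
  have "(1::nat) \<in> {1..2*Suc n}" by simp
  then obtain p0 where "p0 \<in> \<alpha>" using pm unfolding perfect_matching_def by blast
  then obtain p where p: "p \<in> \<alpha>" and pmin: "\<forall>q. q \<in> \<alpha> \<longrightarrow> snd p - fst p \<le> snd q - fst q"
    using ex_has_least_nat[of "\<lambda>p. p \<in> \<alpha>" p0 "\<lambda>p. snd p - fst p"] by blast
  obtain a b where ab: "p = (a,b)" by fastforce
  have rp: "a < b" "b \<le> 2 * Suc n" using pm_range[OF pm p] ab by auto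
  have "b = Suc a"
  proof (rule ccontr)
    assume "b \<noteq> Suc a"
    then have lt: "Suc a < b" using rp by simp
    have "Suc a \<in> {1..2*Suc n}" using lt rp by simp
    then obtain q where q: "q \<in> \<alpha>" "Suc a = fst q \<or> Suc a = snd q"
      using pm unfolding perfect_matching_def by blast
    obtain e d where ed: "q = (e,d)" by fastforce
    have red: "e < d" using pm_range[OF pm q(1)] ed by auto
    from q(2) show False
    proof
      assume e: "Suc a = fst q"
      have "\<not> (a < e \<and> e < b \<and> b < d)" using nc p q(1) ab ed unfolding noncrossing_def by fastforce
      then have "d \<le> b" using e ed lt by auto
      moreover have "d \<noteq> b"
      proof
        assume "d = b"
        then have "q = p" using pm_unique[OF pm q(1) p, of b] ab ed by simp
        then show False using e ab by simp
      qed
      ultimately have "snd q - fst q < snd p - fst p" using e ed ab lt by auto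
      then show False using pmin q(1) by fastforce
    next
      assume d: "Suc a = snd q"
      show False
      proof (cases "e = a")
        case True
        then have "q = p" using pm_unique[OF pm q(1) p, of a] ab ed by simp
        then show False using d ab lt by simp
      next
        case False
        then have "e < a" using d ed red by auto
        have "\<not> (e < a \<and> a < d \<and> d < b)" using nc p q(1) ab ed unfolding noncrossing_def by fastforce
        then show False using \<open>e < a\<close> d ed lt by auto
      qed
    qed
  qed
  then show ?thesis using p ab by blast
qed

lemma kmin_in: assumes "\<alpha> \<in> D (Suc n)" shows "(kmin \<alpha>, Suc (kmin \<alpha>)) \<in> \<alpha>"
  using exists_adj[OF assms] unfolding kmin_def by (metis (mono_tags, lifting) LeastI_ex Suc_eq_plus1)

lemma kmin_le: "(j, Suc j) \<in> \<alpha> \<Longrightarrow> kmin \<alpha> \<le> j"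
  unfolding kmin_def by (rule Least_le) simp

lemma decomp: assumes "\<alpha> \<in> D (Suc n)"
  shows "1 \<le> kmin \<alpha>" "kmin \<alpha> \<le> 2*n+1" "l (kmin \<alpha>) (remove_arc (kmin \<alpha>) \<alpha>) = \<alpha>"
    "remove_arc (kmin \<alpha>) \<alpha> \<in> D n"
proof -
  let ?k = "kmin \<alpha>"
  have pm: "perfect_matching (Suc n) \<alpha>" using assms by (auto simp: D_def)
  have kin: "(?k, Suc ?k) \<in> \<alpha>" by (rule kmin_in[OF assms])
  show b1: "1 \<le> ?k" and b2: "?k \<le> 2*n+1" using pm_range[OF pm kin] by auto
  have other: "fst q \<noteq> ?k \<and> fst q \<noteq> Suc ?k \<and> snd q \<noteq> ?k \<and> snd q \<noteq> Suc ?k"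
    if "q \<in> \<alpha>" "q \<noteq> (?k, Suc ?k)" for q
    using pm_unique[OF pm that(1) kin, of "fst q"] pm_unique[OF pm that(1) kin, of "snd q"] that(2) by auto
  have "sh ?k ` remove_arc ?k \<alpha> = \<alpha> - {(?k, Suc ?k)}"
  proof -
    have "sh ?k ` remove_arc ?k \<alpha> = (\<lambda>q. sh ?k (unshift ?k (fst q), unshift ?k (snd q))) ` (\<alpha> - {(?k, Suc ?k)})"
      unfolding remove_arc_def by (simp add: image_image case_prod_beta')
    also have "\<dots> = (\<lambda>q. q) ` (\<alpha> - {(?k, Suc ?k)})"
      by (rule image_cong) (auto simp: sh_def shift_unshift other)
    finally show ?thesis by simp
  qed
  then show eq: "l ?k (remove_arc ?k \<alpha>) = \<alpha>" unfolding l_sh using kin by auto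
  show "remove_arc ?k \<alpha> \<in> D n" using l_inv_D[of ?k "remove_arc ?k \<alpha>" n] eq assms b1 b2 by simp
qed

definition P :: "nat list \<Rightarrow> bool" where
  "P ks \<longleftrightarrow> last ks = 1 \<and> (\<forall>j. j + 1 < length ks \<longrightarrow> ks ! j \<le> ks ! (j+1) + 1)"

lemma P_single: "P [k] \<longleftrightarrow> k = 1" by (simp add: P_def)

lemma P_cons: "P (k # k' # ks) \<longleftrightarrow> P (k' # ks) \<and> k \<le> k' + 1"
proof
  assume h: "P (k # k' # ks)"
  have "0 + 1 < length (k # k' # ks) \<longrightarrow> (k # k' # ks) ! 0 \<le> (k # k' # ks) ! (0 + 1) + 1"
    using h unfolding P_def by blast
  then have "k \<le> k' + 1" by simp
  moreover have "P (k' # ks)" using h unfolding P_def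
  proof (intro conjI allI impI)
    fix j assume a: "last (k # k' # ks) = 1 \<and> (\<forall>j. j + 1 < length (k # k' # ks) \<longrightarrow> (k # k' # ks) ! j \<le> (k # k' # ks) ! (j + 1) + 1)"
      and "j + 1 < length (k' # ks)"
    then show "(k' # ks) ! j \<le> (k' # ks) ! (j + 1) + 1" using spec[of _ "Suc j"] by auto
  qed auto
  ultimately show "P (k' # ks) \<and> k \<le> k' + 1" by simp
next
  assume h: "P (k' # ks) \<and> k \<le> k' + 1"
  show "P (k # k' # ks)" unfolding P_def
  proof (intro conjI allI impI)
    show "last (k # k' # ks) = 1" using h by (simp add: P_def)
    fix j assume j: "j + 1 < length (k # k' # ks)"
    show "(k # k' # ks) ! j \<le> (k # k' # ks) ! (j + 1) + 1"
    proof (cases j)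
      case 0 then show ?thesis using h by simp
    next
      case (Suc j') then show ?thesis using h j unfolding P_def by auto
    qed
  qed
qed

lemma fwd: "\<alpha> \<in> D (Suc n) \<Longrightarrow> P (rseq (Suc n) \<alpha>)"
proof (induction n arbitrary: \<alpha>)
  case 0
  have "kmin \<alpha> = 1" using decomp(1,2)[OF 0] by simp
  then show ?case by (simp add: P_def)
next
  case (Suc n)
  let ?k = "kmin \<alpha>" let ?\<beta> = "remove_arc ?k \<alpha>"
  have bD: "?\<beta> \<in> D (Suc n)" using decomp(4)[OF Suc.prems] .
  have eq: "l ?k ?\<beta> = \<alpha>" using decomp(3)[OF Suc.prems] .
  have IH: "P (rseq (Suc n) ?\<beta>)" using Suc.IH[OF bD] .
  have "?k \<le> kmin ?\<beta> + 1"
  proof (rule ccontr)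
    assume "\<not> ?thesis"
    then have lt: "Suc (kmin ?\<beta>) < ?k" by simp
    have "sh ?k (kmin ?\<beta>, Suc (kmin ?\<beta>)) \<in> \<alpha>" using kmin_in[OF bD] eq by (auto simp: l_sh)
    then have "(kmin ?\<beta>, Suc (kmin ?\<beta>)) \<in> \<alpha>" using lt by (simp add: sh_def shift_def)
    then have "?k \<le> kmin ?\<beta>" by (rule kmin_le)
    then show False using lt by simp
  qed
  then show ?case using IH by (simp add: P_cons)
qed

lemma bwd: "length ks = Suc n \<Longrightarrow> P ks \<Longrightarrow> \<forall>x\<in>set ks. x > 0 \<Longrightarrow>
   \<exists>\<alpha>\<in>D (Suc n). rseq (Suc n) \<alpha> = ks \<and> hd ks \<le> 2*n+1"
proof (induction n arbitrary: ks)
  case 0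
  from 0(1) obtain k where ks: "ks = [k]" by (auto simp: length_Suc_conv)
  have k1: "k = 1" using 0(2) ks by (simp add: P_single)
  have e: "{} \<in> D 0" unfolding D_def perfect_matching_def noncrossing_def by simp
  have d1: "l 1 {} \<in> D (Suc 0)" using l_in_D[OF e] by simp
  have km: "kmin (l 1 {}) = 1" by (rule kmin_l) simp
  have "rseq (Suc 0) (l 1 {}) = ks \<and> hd ks \<le> 2*0+1" using km ks k1 by simp
  then show ?case using d1 by blast
next
  case (Suc n)
  from Suc.prems(1) obtain k k' ks'' where ks: "ks = k # k' # ks''" by (auto simp: length_Suc_conv)
  have Pk: "P (k' # ks'')" "k \<le> k' + 1" using Suc.prems(2) ks by (auto simp: P_cons)
  have len: "length (k' # ks'') = Suc n" using Suc.prems(1) ks by simp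
  have pos: "\<forall>x\<in>set (k' # ks''). x > 0" using Suc.prems(3) ks by simp
  obtain \<beta> where b: "\<beta> \<in> D (Suc n)" "rseq (Suc n) \<beta> = k' # ks''" "hd (k' # ks'') \<le> 2*n+1"
    using Suc.IH[OF len Pk(1) pos] by blast
  have kb: "kmin \<beta> = k'" using b(2) by simp
  have k0: "1 \<le> k" using Suc.prems(3) ks by auto
  have aD: "l k \<beta> \<in> D (Suc (Suc n))" using l_in_D[OF b(1) k0, of] Pk(2) b(3) by simp
  have "\<forall>a. (a, Suc a) \<in> \<beta> \<longrightarrow> k \<le> Suc a" using kmin_le[of _ \<beta>] kb Pk(2) by fastforce
  then have km: "kmin (l k \<beta>) = k" by (rule kmin_l)
  have "rseq (Suc (Suc n)) (l k \<beta>) = ks" using km ks b(2) kb by (simp add: remove_l)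
  moreover have "hd ks \<le> 2 * Suc n + 1" using ks Pk(2) b(3) by simp
  ultimately show ?case using aD by blast
qed

theorem mainTheorem3:
  fixes n :: nat and ks :: "nat list"
  assumes "n \<ge> 1" and "length ks = n" and "\<forall>k\<in>set ks. k > 0"
  shows "(\<exists>\<alpha>\<in>D n. rseq n \<alpha> = ks) \<longleftrightarrow>
         (last ks = 1 \<and> (\<forall>j. j + 1 < n \<longrightarrow> ks ! j \<le> ks ! (j+1) + 1))"
proof -
  obtain m where m: "n = Suc m" using assms(1) by (cases n) auto
  have e1: "(last ks = 1 \<and> (\<forall>j. j + 1 < n \<longrightarrow> ks ! j \<le> ks ! (j+1) + 1)) \<longleftrightarrow> P ks"
    unfolding P_def assms(2) ..
  have e2: "(\<exists>\<alpha>\<in>D n. rseq n \<alpha> = ks) \<longleftrightarrow> P ks"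
  proof
    assume "\<exists>\<alpha>\<in>D n. rseq n \<alpha> = ks"
    then obtain \<alpha> where a: "\<alpha> \<in> D (Suc m)" "rseq (Suc m) \<alpha> = ks" unfolding m by blast
    have "P (rseq (Suc m) \<alpha>)" by (rule fwd[OF a(1)])
    then show "P ks" unfolding a(2) .
  next
    assume h: "P ks"
    have len: "length ks = Suc m" using assms(2) m by simp
    obtain \<alpha> where "\<alpha> \<in> D (Suc m)" "rseq (Suc m) \<alpha> = ks" using bwd[OF len h assms(3)] by blast
    then show "\<exists>\<alpha>\<in>D n. rseq n \<alpha> = ks" unfolding m by blast
  qed
  show ?thesis unfolding e1 e2 ..
qed

end
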